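(* Let $A$ be a commutative ring, $a\in A$ a non-zero-divisor, and $\mathcal D=\partial_z-a:A[z]\to A[z]$, $h\mapsto h'-ah$. Let $f=b_0+b_1z+\cdots+b_dz^d\in A[z]$ with $b_0,\ldots,b_d\in A$. (i) If $f\in\mathrm{Im}\,\mathcal D$, then $b_d\equiv 0\pmod{a}$ and $$d!\,b_d+(d-1)!\,b_{d-1}a+(d-2)!\,b_{d-2}a^2+\cdots+0!\,b_0a^d\equiv 0\pmod{a^{d+1}}.$$ (ii) Conversely, suppose $A$ is either a $\mathbb Q$-algebra, or an $\mathbb F_p$-algebra with $d<p$. If $f$ satisfies the congruence $\sum_{j=0}^{d}(d-j)!\,b_{d-j}a^{j}\equiv 0\pmod{a^{d+1}}$, then $f\in\mathrm{Im}\,\mathcal D$.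
   Context: Congruences are in $A$: $x\equiv 0\pmod{a^k}$ means $x\in Aa^k$. *)

theory Defs
  imports "HOL-Computational_Algebra.Polynomial" "HOL-Computational_Algebra.Primes"
begin

text \<open>Formal derivative over an arbitrary commutative ring (the library pderiv needs no zero divisors):
  the derivative of sum c_i z^i is sum i c_i z^(i-1).\<close>
definition fderiv :: "'a::comm_ring_1 poly \<Rightarrow> 'a poly" where
  "fderiv h = (\<Sum>i\<le>degree h. monom (of_nat i * coeff h i) (i - 1))"

definition Dop :: "'a::comm_ring_1 \<Rightarrow> 'a poly \<Rightarrow> 'a poly" where
  "Dop a h = fderiv h - smult a h"

definition Q_algebra :: "'a::comm_ring_1 itself \<Rightarrow> bool" where
  "Q_algebra _ \<longleftrightarrow> (\<exists>\<phi>::rat \<Rightarrow> 'a. \<phi> 1 = 1 \<and> (\<forall>x y. \<phi> (x + y) = \<phi> x + \<phi> y)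
                                   \<and> (\<forall>x y. \<phi> (x * y) = \<phi> x * \<phi> y))"

text \<open>A is an F_p-algebra (p prime): p * 1 = 0 in A, i.e. Z -> A factors through Z/pZ.\<close>
definition Fp_algebra :: "'a::comm_ring_1 itself \<Rightarrow> nat \<Rightarrow> bool" where
  "Fp_algebra _ p \<longleftrightarrow> prime p \<and> (of_nat p :: 'a) = 0"

end

theory Submission
  imports Defs
begin

lemma coeff_fderiv: "coeff (fderiv h) k = of_nat (k+1) * coeff h (k+1)"
proof -
  have "coeff (fderiv h) k = (\<Sum>i\<le>degree h. if i - 1 = k then of_nat i * coeff h i else 0)"
    unfolding fderiv_def coeff_sum coeff_monom by (rule sum.cong) auto
  also have "\<dots> = (\<Sum>i\<le>degree h. if i = k+1 then of_nat i * coeff h i else 0)"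
  proof (rule sum.cong)
    fix i show "(if i - 1 = k then of_nat i * coeff h i else 0) = (if i = k+1 then of_nat i * coeff h i else 0)"
      by (cases i) auto
  qed simp
  also have "\<dots> = of_nat (k+1) * coeff h (k+1)"
    by (auto simp: coeff_eq_0)
  finally show ?thesis .
qed

lemma coeff_Dop: "coeff (Dop a h) k = of_nat (k+1) * coeff h (k+1) - a * coeff h k"
  by (simp add: Dop_def coeff_fderiv)

lemma coeff_sum_monom: "coeff (\<Sum>j\<le>d. monom (b j) j) k = (if k \<le> d then b k else 0)"
  by (simp add: coeff_sum coeff_monom)

lemma pow_cancel:
  fixes a :: "'a::comm_ring_1"
  assumes nzd: "\<forall>c. a * c = 0 \<longrightarrow> c = 0"
  shows "a ^ n * x = a ^ n * y \<Longrightarrow> x = y"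
proof (induction n)
  case 0 then show ?case by simp
next
  case (Suc n)
  then have "a * (a^n * x - a^n * y) = 0" by (simp add: algebra_simps)
  then show ?case using nzd Suc.IH by auto
qed

lemma telescope:
  fixes a :: "'a::comm_ring_1"
  shows "(\<Sum>k\<le>d. of_nat (fact k) * (of_nat (k+1) * h (k+1) - a * h k) * a ^ (d - k))
     = of_nat (fact (d+1)) * h (d+1) - h 0 * a ^ (d+1)"
proof (induction d)
  case 0 then show ?case by simp
next
  case (Suc d)
  have "(\<Sum>k\<le>Suc d. of_nat (fact k) * (of_nat (k+1) * h (k+1) - a * h k) * a ^ (Suc d - k))
    = a * (\<Sum>k\<le>d. of_nat (fact k) * (of_nat (k+1) * h (k+1) - a * h k) * a ^ (d - k))
      + of_nat (fact (Suc d)) * (of_nat (Suc d+1) * h (Suc d+1) - a * h (Suc d))"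
  proof -
    have "(\<Sum>k\<le>d. of_nat (fact k) * (of_nat (k+1) * h (k+1) - a * h k) * a ^ (Suc d - k))
      = (\<Sum>k\<le>d. a * (of_nat (fact k) * (of_nat (k+1) * h (k+1) - a * h k) * a ^ (d - k)))"
      by (rule sum.cong) (auto simp: Suc_diff_le)
    then show ?thesis by (simp add: sum_distrib_left)
  qed
  also have "\<dots> = of_nat (fact (Suc d+1)) * h (Suc d+1) - h 0 * a ^ (Suc d+1)"
    unfolding Suc.IH by (simp add: algebra_simps)
  finally show ?case .
qed

lemma rev_sum: "(\<Sum>j\<le>(d::nat). g (d - j)) = (\<Sum>k\<le>d. (g k :: 'a::comm_monoid_add))"
  by (rule sum.reindex_bij_witness[of _ "\<lambda>k. d - k" "\<lambda>k. d - k"]; auto)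

lemma fact_inv:
  assumes "Q_algebra TYPE('a::comm_ring_1) \<or> (\<exists>p. Fp_algebra TYPE('a) p \<and> d < p)" "k \<le> d"
  shows "\<exists>u::'a. u * of_nat (fact k) = 1"
  using assms(1)
proof
  assume "Q_algebra TYPE('a)"
  then obtain \<phi> :: "rat \<Rightarrow> 'a" where p1: "\<phi> 1 = 1" and padd: "\<forall>x y. \<phi> (x + y) = \<phi> x + \<phi> y"
    and pmul: "\<forall>x y. \<phi> (x * y) = \<phi> x * \<phi> y" unfolding Q_algebra_def by blast
  have p0: "\<phi> 0 = 0" using padd[rule_format, of 0 0] by simp
  have pn: "\<phi> (of_nat n) = of_nat n" for n
    by (induction n) (simp_all add: p0 padd p1)
  have "\<phi> (1 / of_nat (fact k)) * \<phi> (of_nat (fact k)) = 1"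
    using pmul[rule_format, of "1 / of_nat (fact k)" "of_nat (fact k)"] p1 by simp
  then show ?thesis using pn by metis
next
  assume "\<exists>p. Fp_algebra TYPE('a) p \<and> d < p"
  then obtain p where pp: "prime p" and p0: "(of_nat p :: 'a) = 0" and dp: "d < p"
    unfolding Fp_algebra_def by blast
  have "\<not> p dvd fact k" using prime_dvd_fact_iff[OF pp] dp assms(2) by simp
  then have "coprime p (fact k)" using pp prime_imp_coprime by blast
  then have "coprime (int (fact k)) (int p)" by (metis coprime_commute coprime_int_iff)
  then obtain u v where "u * int (fact k) + v * int p = 1" using bezout_int[of "int (fact k)" "int p"] by auto
  then have "of_int (u * int (fact k) + v * int p) = (1::'a)" by simp
  then have "of_int u * of_nat (fact k) = (1::'a)" using p0 by (simp del: of_nat_fact of_int_fact)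
  then show ?thesis by blast
qed


theorem proposition2p10:
  fixes a :: "'a::comm_ring_1" and b :: "nat \<Rightarrow> 'a" and d :: nat and f :: "'a poly"
  assumes nzd: "\<forall>c. a * c = 0 \<longrightarrow> c = 0"
    and f_def: "f = (\<Sum>j\<le>d. monom (b j) j)"
  shows "(f \<in> range (Dop a) \<longrightarrow>
            a dvd b d \<and>
            a ^ (d + 1) dvd (\<Sum>j\<le>d. of_nat (fact (d - j)) * b (d - j) * a ^ j))
       \<and> ((Q_algebra TYPE('a) \<or> (\<exists>p. Fp_algebra TYPE('a) p \<and> d < p)) \<longrightarrow>
            a ^ (d + 1) dvd (\<Sum>j\<le>d. of_nat (fact (d - j)) * b (d - j) * a ^ j) \<longrightarrow>
            f \<in> range (Dop a))"
proof -
  have cf: "coeff f k = (if k \<le> d then b k else 0)" for k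
    unfolding f_def by (rule coeff_sum_monom)
  have Sre: "(\<Sum>j\<le>d. of_nat (fact (d - j)) * b (d - j) * a ^ j)
      = (\<Sum>k\<le>d. of_nat (fact k) * b k * a ^ (d - k))"
  proof -
    have "(\<Sum>j\<le>d. of_nat (fact (d - j)) * b (d - j) * a ^ j)
        = (\<Sum>j\<le>d. (\<lambda>k. of_nat (fact k) * b k * a ^ (d - k)) (d - j))"
      by (rule sum.cong) auto
    then show ?thesis using rev_sum[of "\<lambda>k. of_nat (fact k) * b k * a ^ (d - k)" d] by simp
  qed
  have part1: "a dvd b d \<and> a ^ (d + 1) dvd (\<Sum>j\<le>d. of_nat (fact (d - j)) * b (d - j) * a ^ j)"
    if "f \<in> range (Dop a)"
  proof -
    from that obtain h where fh: "f = Dop a h" by auto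
    have rec: "(if k \<le> d then b k else 0) = of_nat (k+1) * coeff h (k+1) - a * coeff h k" for k
      using cf[of k] coeff_Dop[of a h k] fh by simp
    have vanish: "\<forall>k. d < k \<longrightarrow> degree h < k + n \<longrightarrow> coeff h k = 0" for n
    proof (induction n)
      case 0 then show ?case by (auto simp: coeff_eq_0)
    next
      case (Suc n)
      show ?case
      proof (intro allI impI)
        fix k assume k: "d < k" "degree h < k + Suc n"
        then have "coeff h (k+1) = 0" using Suc.IH by auto
        then have "a * coeff h k = 0" using rec[of k] k by simp
        then show "coeff h k = 0" using nzd by blast
      qed
    qed
    have hd1: "coeff h (d+1) = 0" using vanish[of "degree h + 1"] by auto
    have "b d = - (a * coeff h d)" using rec[of d] hd1 by simp
    then have 1: "a dvd b d" by simp
    have "(\<Sum>k\<le>d. of_nat (fact k) * b k * a ^ (d - k))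
       = (\<Sum>k\<le>d. of_nat (fact k) * (of_nat (k+1) * coeff h (k+1) - a * coeff h k) * a ^ (d - k))"
    proof (rule sum.cong)
      fix k assume "k \<in> {..d}"
      then have "b k = of_nat (k+1) * coeff h (k+1) - a * coeff h k" using rec[of k] by simp
      then show "of_nat (fact k) * b k * a ^ (d - k) = of_nat (fact k) * (of_nat (k+1) * coeff h (k+1) - a * coeff h k) * a ^ (d - k)" by simp
    qed simp
    also have "\<dots> = - (coeff h 0 * a ^ (d+1))"
      unfolding telescope hd1 by simp
    finally have "a ^ (d+1) dvd (\<Sum>k\<le>d. of_nat (fact k) * b k * a ^ (d - k))"
      by (metis dvd_minus_iff dvd_triv_right)
    with 1 Sre show ?thesis by simp
  qed
  have part2: "f \<in> range (Dop a)"
    if alg: "Q_algebra TYPE('a) \<or> (\<exists>p. Fp_algebra TYPE('a) p \<and> d < p)"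
      and S: "a ^ (d + 1) dvd (\<Sum>j\<le>d. of_nat (fact (d - j)) * b (d - j) * a ^ j)"
  proof -
    define T where "T k = (\<Sum>m\<in>{k..d}. of_nat (fact m) * b m * a ^ (d - m))" for k
    have Tsplit: "T k = of_nat (fact k) * b k * a ^ (d - k) + T (Suc k)" if "k \<le> d" for k
      unfolding T_def using that by (simp add: sum.atLeast_Suc_atMost)
    have Tdvd: "k \<le> d + 1 \<Longrightarrow> a ^ (d + 1 - k) dvd T k" for k
    proof (induction k)
      case 0
      have "T 0 = (\<Sum>k\<le>d. of_nat (fact k) * b k * a ^ (d - k))"
        unfolding T_def by (simp add: atLeast0AtMost)
      then show ?case using S Sre by simp
    next
      case (Suc k)
      then have kd: "k \<le> d" by simp
      have p: "a ^ (d + 1 - k) = a ^ (d + 1 - Suc k) * a"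
        using kd by (simp add: Suc_diff_le power_Suc2[symmetric])
      have "a ^ (d + 1 - Suc k) dvd T k" 
      proof -
        have "a ^ (d + 1 - k) dvd T k" using Suc.IH kd by simp
        then show ?thesis unfolding p by (rule dvd_mult_left)
      qed
      moreover have "a ^ (d + 1 - Suc k) dvd of_nat (fact k) * b k * a ^ (d - k)" by simp
      ultimately have "a ^ (d + 1 - Suc k) dvd T k - of_nat (fact k) * b k * a ^ (d - k)"
        by (rule dvd_diff)
      then show ?case using Tsplit[OF kd] by simp
    qed
    define g where "g k = (SOME x. T k = a ^ (d + 1 - k) * x)" for k
    have gT: "T k = a ^ (d + 1 - k) * g k" if "k \<le> d + 1" for k
    proof -
      from Tdvd[OF that] obtain x where "T k = a ^ (d + 1 - k) * x" by (auto elim: dvdE)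
      then show ?thesis unfolding g_def by (rule someI)
    qed
    have gd1: "g (d+1) = 0"
      using gT[of "d+1"] by (simp add: T_def)
    have grec: "a * g k = g (Suc k) + of_nat (fact k) * b k" if kd: "k \<le> d" for k
    proof -
      have pk: "a ^ (d + 1 - k) = a ^ (d - k) * a" using kd by (simp add: Suc_diff_le)
      have "a ^ (d - k) * (a * g k) = T k"
        using gT[of k] kd unfolding pk by (simp add: mult.assoc)
      also have "\<dots> = of_nat (fact k) * b k * a ^ (d - k) + T (Suc k)" by (rule Tsplit[OF kd])
      also have "\<dots> = a ^ (d - k) * (g (Suc k) + of_nat (fact k) * b k)"
        using gT[of "Suc k"] kd by (simp add: algebra_simps)
      finally show ?thesis using pow_cancel[OF nzd] by blast
    qed
    define iv where "iv k = (SOME u. u * (of_nat (fact k) :: 'a) = 1)" for k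
    have ivp: "iv k * of_nat (fact k) = 1" if "k \<le> d" for k
      unfolding iv_def using fact_inv[OF alg that] by (rule someI_ex)
    have ivs: "of_nat (Suc k) * iv (Suc k) = iv k" if "Suc k \<le> d" for k
    proof -
      have "iv k = iv k * (iv (Suc k) * of_nat (fact (Suc k)))" using ivp[OF that] by simp
      also have "\<dots> = (iv k * of_nat (fact k)) * (of_nat (Suc k) * iv (Suc k))"
        by (simp add: algebra_simps)
      also have "\<dots> = of_nat (Suc k) * iv (Suc k)" using ivp[of k] that by simp
      finally show ?thesis by simp
    qed
    define h where "h = (\<Sum>k\<le>d. monom (- (g k * iv k)) k)"
    have ch: "coeff h k = (if k \<le> d then - (g k * iv k) else 0)" for k
      unfolding h_def by (rule coeff_sum_monom)
    have "Dop a h = f"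
    proof (rule poly_eqI)
      fix k
      show "coeff (Dop a h) k = coeff f k"
      proof (cases "k \<le> d")
        case False then show ?thesis by (simp add: coeff_Dop ch cf)
      next
        case True
        have A: "of_nat (k+1) * coeff h (k+1) = - (g (Suc k) * iv k)"
        proof (cases "Suc k \<le> d")
          case True
          then show ?thesis using ivs[OF True] by (simp add: ch algebra_simps)
        next
          case False
          then have "k = d" using \<open>k \<le> d\<close> by simp
          then show ?thesis using gd1 by (simp add: ch)
        qed
        have "a * coeff h k = - ((a * g k) * iv k)" using True by (simp add: ch mult.assoc)
        also have "\<dots> = - (g (Suc k) * iv k + b k * (iv k * of_nat (fact k)))"
          unfolding grec[OF True] by (simp add: algebra_simps)
        also have "\<dots> = - (g (Suc k) * iv k + b k)" using ivp[OF True] by simp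
        finally have "a * coeff h k = - (g (Suc k) * iv k + b k)" .
        then show ?thesis using A True by (simp add: coeff_Dop cf)
      qed
    qed
    then show ?thesis by blast
  qed
  show ?thesis using part1 part2 by blast
qed

end
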